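(* Let $\mathbb{X},\mathbb{Y}$ be real normed linear spaces and $T\in\mathbb{B}(\mathbb{X},\mathbb{Y})$ with $T\neq0$ and $M_T\neq\emptyset$. Then $T$ is a smooth point of $\mathbb{B}(\mathbb{X},\mathbb{Y})$ if and only if all of the following hold: (i) $M_T=\{\pm x_0\}$ for some $x_0\in S_{\mathbb{X}}$; (ii) $Tx_0$ is a smooth point of $\mathbb{Y}$; (iii) for every $A\in\mathbb{B}(\mathbb{X},\mathbb{Y})$, $T\perp_B A$ if and only if $Tx_0\perp_B Ax_0$.
   Context: All spaces are real; $\mathbb{B}(\mathbb{X},\mathbb{Y})$ has the operator norm; $S_{\mathbb{X}}$ is the unit sphere; $M_T=\{x\in S_{\mathbb{X}}:\|Tx\|=\|T\|\}$. A nonzero element $x$ of a normed space $\mathbb{Z}$ is smooth if there is a unique $f\in\mathbb{Z}^*$ with $\|f\|=1$ and $f(x)=\|x\|$. $x\perp_B y$ means $\|x+\lambda y\|\ge\|x\|$ for all $\lambda\in\mathbb{R}$. *)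

theory Defs
  imports "HOL-Analysis.Analysis"
begin

definition smooth_point :: "'a::real_normed_vector \<Rightarrow> bool" where
  "smooth_point x \<longleftrightarrow> x \<noteq> 0 \<and>
     (\<exists>!f :: 'a \<Rightarrow>\<^sub>L real. norm f = 1 \<and> blinfun_apply f x = norm x)"

definition birkhoff_orth :: "'a::real_normed_vector \<Rightarrow> 'a \<Rightarrow> bool" where
  "birkhoff_orth x y \<longleftrightarrow> (\<forall>t::real. norm (x + t *\<^sub>R y) \<ge> norm x)"

definition norm_attain_set :: "('a::real_normed_vector \<Rightarrow>\<^sub>L 'b::real_normed_vector) \<Rightarrow> 'a set" where
  "norm_attain_set T = {x. norm x = 1 \<and> norm (blinfun_apply T x) = norm T}"

end

theory Submission
  imports Defs
begin

definition good :: "('a::real_normed_vector \<times> real) set \<Rightarrow> bool" where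
 "good G \<longleftrightarrow> (0,0) \<in> G \<and> (\<forall>x a b. (x,a)\<in>G \<longrightarrow> (x,b)\<in>G \<longrightarrow> a = b)
   \<and> (\<forall>x a y b. (x,a)\<in>G \<longrightarrow> (y,b)\<in>G \<longrightarrow> (x+y,a+b)\<in>G)
   \<and> (\<forall>x a c. (x,a)\<in>G \<longrightarrow> (c *\<^sub>R x, c*a) \<in> G) \<and> (\<forall>x a. (x,a)\<in>G \<longrightarrow> a \<le> norm x)"

lemma good_ext:
  fixes M :: "('a::real_normed_vector \<times> real) set"
  assumes g: "good M" and z: "z \<notin> fst ` M"
  shows "\<exists>M'. good M' \<and> M \<subset> M'"
proof -
  have M0: "(0,0) \<in> M" and Mf: "\<And>x a b. (x,a)\<in>M \<Longrightarrow> (x,b)\<in>M \<Longrightarrow> a = b"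
    and Ma: "\<And>x a y b. (x,a)\<in>M \<Longrightarrow> (y,b)\<in>M \<Longrightarrow> (x+y,a+b)\<in>M"
    and Ms: "\<And>x a c. (x,a)\<in>M \<Longrightarrow> (c *\<^sub>R x, c*a) \<in> M"
    and Md: "\<And>x a. (x,a)\<in>M \<Longrightarrow> a \<le> norm x"
    using g unfolding good_def by blast+
  define S where "S = {a - norm (u - z) | u a. (u,a) \<in> M}"
  define c where "c = Sup S"
  have key: "a - norm (u - z) \<le> norm (v + z) - b" if "(u,a)\<in>M" "(v,b)\<in>M" for u a v b
  proof -
    have "a + b \<le> norm (u + v)" using Md[OF Ma[OF that]] .
    also have "u + v = (u - z) + (v + z)" by simp
    also have "norm \<dots> \<le> norm (u - z) + norm (v + z)" by (rule norm_triangle_ineq)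
    finally show ?thesis by simp
  qed
  have Sne: "S \<noteq> {}" using M0 unfolding S_def by blast
  have Sbdd: "bdd_above S" unfolding S_def bdd_above_def
    using key[OF _ M0] by auto
  have c_ge: "a - norm (u - z) \<le> c" if "(u,a)\<in>M" for u a
    unfolding c_def by (rule cSup_upper[OF _ Sbdd]) (use that S_def in blast)
  have c_le: "c \<le> norm (v + z) - b" if "(v,b)\<in>M" for v b
    unfolding c_def by (rule cSup_least[OF Sne]) (use key that S_def in blast)
  define M' where "M' = {(x + t *\<^sub>R z, a + t*c) | x a t. (x,a) \<in> M}"
  have "(0,0) \<in> M'" unfolding M'_def using M0 by force
  moreover have "a = b" if h: "(y,a) \<in> M'" "(y,b) \<in> M'" for y a b
  proof -
    obtain x a1 t where 1: "(x,a1)\<in>M" "y = x + t *\<^sub>R z" "a = a1 + t*c" using h(1) M'_def by blast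
    obtain x' a1' t' where 2: "(x',a1')\<in>M" "y = x' + t' *\<^sub>R z" "b = a1' + t'*c" using h(2) M'_def by blast
    have d: "(x - x', a1 - a1') \<in> M" using Ma[OF 1(1) Ms[OF 2(1), of "-1"]] by simp
    show ?thesis
    proof (cases "t = t'")
      case True
      then have "x = x'" using 1 2 by simp
      then show ?thesis using Mf[OF 1(1)] 2 1 True by simp
    next
      case False
      have "(t' - t) *\<^sub>R z = x - x'" using 1 2 by (simp add: algebra_simps)
      then have "(1/(t'-t)) *\<^sub>R ((t' - t) *\<^sub>R z) = (1/(t'-t)) *\<^sub>R (x - x')" by simp
      then have "z = (1/(t'-t)) *\<^sub>R (x - x')" using False by simp
      then have "z \<in> fst ` M" using Ms[OF d, of "1/(t'-t)"] by force
      then show ?thesis using z by blast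
    qed
  qed
  moreover have "(x+y,a+b)\<in>M'" if h: "(x,a)\<in>M'" "(y,b)\<in>M'" for x a y b
  proof -
    obtain x1 a1 t where 1: "(x1,a1)\<in>M" "x = x1 + t *\<^sub>R z" "a = a1 + t*c" using h(1) M'_def by blast
    obtain x2 a2 t' where 2: "(x2,a2)\<in>M" "y = x2 + t' *\<^sub>R z" "b = a2 + t'*c" using h(2) M'_def by blast
    have "x + y = (x1+x2) + (t+t') *\<^sub>R z" "a + b = (a1+a2) + (t+t')*c"
      using 1 2 by (simp_all add: algebra_simps)
    then show ?thesis unfolding M'_def using Ma[OF 1(1) 2(1)] by blast
  qed
  moreover have "(r *\<^sub>R x, r*a)\<in>M'" if h: "(x,a)\<in>M'" for x a r
  proof -
    obtain x1 a1 t where 1: "(x1,a1)\<in>M" "x = x1 + t *\<^sub>R z" "a = a1 + t*c" using h(1) M'_def by blast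
    have "r *\<^sub>R x = r *\<^sub>R x1 + (r*t) *\<^sub>R z" "r*a = r*a1 + (r*t)*c"
      using 1 by (simp_all add: algebra_simps)
    then show ?thesis unfolding M'_def using Ms[OF 1(1)] by blast
  qed
  moreover have "a \<le> norm x" if h: "(x,a)\<in>M'" for x a
  proof -
    obtain x1 a1 t where 1: "(x1,a1)\<in>M" "x = x1 + t *\<^sub>R z" "a = a1 + t*c" using h(1) M'_def by blast
    consider "t = 0" | "t > 0" | "t < 0" by linarith
    then show ?thesis
    proof cases
      case 1 with \<open>(x1,a1)\<in>M\<close> \<open>x = _\<close> \<open>a = _\<close> show ?thesis using Md by auto
    next
      case 2
      have "(1/t) * a1 + c \<le> norm ((1/t) *\<^sub>R x1 + z)"
        using c_le[OF Ms[OF 1(1), of "1/t"]] by simp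
      then have "t * ((1/t) * a1 + c) \<le> t * norm ((1/t) *\<^sub>R x1 + z)"
        using 2 by (simp add: mult_left_mono)
      moreover have "t * norm ((1/t) *\<^sub>R x1 + z) = norm (t *\<^sub>R ((1/t) *\<^sub>R x1 + z))"
        using 2 by simp
      moreover have "t *\<^sub>R ((1/t) *\<^sub>R x1 + z) = x" using 2 1 by (simp add: algebra_simps)
      moreover have "t * ((1/t) * a1 + c) = a" using 2 1 by (simp add: field_simps)
      ultimately show ?thesis by simp
    next
      case 3
      define s where "s = -t"
      have s: "s > 0" using 3 s_def by simp
      have "(1/s) * a1 - c \<le> norm ((1/s) *\<^sub>R x1 - z)"
        using c_ge[OF Ms[OF 1(1), of "1/s"]] by simp
      then have "s * ((1/s) * a1 - c) \<le> s * norm ((1/s) *\<^sub>R x1 - z)"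
        using s by (simp add: mult_left_mono)
      moreover have "s * norm ((1/s) *\<^sub>R x1 - z) = norm (s *\<^sub>R ((1/s) *\<^sub>R x1 - z))"
        using s by simp
      moreover have "s *\<^sub>R ((1/s) *\<^sub>R x1 - z) = x" using s 1 s_def by (simp add: algebra_simps)
      moreover have "s * ((1/s) * a1 - c) = a" using s 1 s_def by (simp add: field_simps)
      ultimately show ?thesis by simp
    qed
  qed
  ultimately have "good M'" unfolding good_def by blast
  moreover have "M \<subseteq> M'"
  proof
    fix p assume "p \<in> M"
    then obtain x a where "p = (x,a)" "(x,a) \<in> M" by (cases p) auto
    then show "p \<in> M'" unfolding M'_def by force
  qed
  moreover have "(z, c) \<in> M'" unfolding M'_def using M0 by force
  moreover have "(z, c) \<notin> M" using z by force
  ultimately show ?thesis by blast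
qed

lemma good_chain:
  assumes C: "C \<in> chains {G. good G \<and> G0 \<subseteq> G}" and ne: "C \<noteq> {}"
  shows "good (\<Union>C)"
proof -
  have sub: "\<And>G. G \<in> C \<Longrightarrow> good G" and ch: "\<And>A B. A \<in> C \<Longrightarrow> B \<in> C \<Longrightarrow> A \<subseteq> B \<or> B \<subseteq> A"
    using C unfolding chains_def chain_subset_def by blast+
  have two: "\<exists>G\<in>C. p \<in> G \<and> q \<in> G" if h: "p \<in> \<Union>C" "q \<in> \<Union>C" for p q
  proof -
    obtain A B where "A \<in> C" "B \<in> C" "p \<in> A" "q \<in> B" using h by blast
    then show ?thesis using ch[of A B] by blast
  qed
  show ?thesis unfolding good_def
  proof (intro conjI allI impI)
    show "(0,0) \<in> \<Union>C" using ne sub unfolding good_def by blast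
  next
    fix x a b assume "(x,a) \<in> \<Union>C" "(x,b) \<in> \<Union>C"
    then obtain G where "G \<in> C" "(x,a) \<in> G" "(x,b) \<in> G" using two by blast
    then show "a = b" using sub unfolding good_def by blast
  next
    fix x a y b assume "(x,a) \<in> \<Union>C" "(y,b) \<in> \<Union>C"
    then obtain G where "G \<in> C" "(x,a) \<in> G" "(y,b) \<in> G" using two by blast
    then show "(x+y,a+b) \<in> \<Union>C" using sub unfolding good_def by blast
  next
    fix x a r assume "(x,a) \<in> \<Union>C"
    then obtain G where "G \<in> C" "(x,a) \<in> G" by blast
    then show "(r *\<^sub>R x, r*a) \<in> \<Union>C" using sub unfolding good_def by blast
  next
    fix x a assume "(x,a) \<in> \<Union>C"
    then obtain G where "G \<in> C" "(x,a) \<in> G" by blast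
    then show "a \<le> norm x" using sub unfolding good_def by blast
  qed
qed

lemma hb:
  fixes G0 :: "('a::real_normed_vector \<times> real) set"
  assumes g0: "good G0"
  shows "\<exists>F::'a \<Rightarrow>\<^sub>L real. norm F \<le> 1 \<and> (\<forall>x a. (x,a)\<in>G0 \<longrightarrow> blinfun_apply F x = a)"
proof -
  define A where "A = {G::('a \<times> real) set. good G \<and> G0 \<subseteq> G}"
  have "\<forall>C\<in>chains A. \<exists>U\<in>A. \<forall>X\<in>C. X \<subseteq> U"
  proof
    fix C assume C: "C \<in> chains A"
    show "\<exists>U\<in>A. \<forall>X\<in>C. X \<subseteq> U"
    proof (cases "C = {}")
      case True then show ?thesis using g0 A_def by blast
    next
      case False
      have "good (\<Union>C)" using good_chain[OF C[unfolded A_def] False] .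
      moreover have "G0 \<subseteq> \<Union>C" using C False unfolding A_def chains_def by blast
      ultimately show ?thesis unfolding A_def by blast
    qed
  qed
  from Zorn_Lemma2[OF this] obtain M where M: "M \<in> A" and max: "\<And>X. X \<in> A \<Longrightarrow> M \<subseteq> X \<Longrightarrow> X = M"
    by blast
  have gM: "good M" and G0M: "G0 \<subseteq> M" using M A_def by auto
  have all: "fst ` M = UNIV"
  proof (rule ccontr)
    assume "fst ` M \<noteq> UNIV"
    then obtain z where "z \<notin> fst ` M" by blast
    from good_ext[OF gM this] obtain M' where "good M'" "M \<subset> M'" by blast
    then have "M' \<in> A" using G0M A_def by blast
    with max \<open>M \<subset> M'\<close> show False by blast
  qed
  have Mf: "\<And>x a b. (x,a)\<in>M \<Longrightarrow> (x,b)\<in>M \<Longrightarrow> a = b"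
    and Ma: "\<And>x a y b. (x,a)\<in>M \<Longrightarrow> (y,b)\<in>M \<Longrightarrow> (x+y,a+b)\<in>M"
    and Ms: "\<And>x a c. (x,a)\<in>M \<Longrightarrow> (c *\<^sub>R x, c*a) \<in> M"
    and Md: "\<And>x a. (x,a)\<in>M \<Longrightarrow> a \<le> norm x"
    using gM unfolding good_def by blast+
  define f where "f x = (THE a. (x,a) \<in> M)" for x
  have fM: "(x, f x) \<in> M" for x
  proof -
    have "x \<in> fst ` M" using all by simp
    then obtain a where a: "(x,a) \<in> M" by force
    then have "f x = a" unfolding f_def using Mf by blast
    then show ?thesis using a by simp
  qed
  have fe: "f x = a" if "(x,a) \<in> M" for x a using Mf[OF that fM] by simp
  have add: "f (x + y) = f x + f y" for x y using fe[OF Ma[OF fM fM]] .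
  have sc: "f (r *\<^sub>R x) = r *\<^sub>R f x" for r x using fe[OF Ms[OF fM]] by simp
  have bd: "norm (f x) \<le> norm x * 1" for x
  proof -
    have "f x \<le> norm x" using Md[OF fM] .
    moreover have "f (-x) \<le> norm (-x)" using Md[OF fM] .
    moreover have "f (-x) = - f x" using sc[of "-1" x] by simp
    ultimately show ?thesis by simp
  qed
  have bl: "bounded_linear f" by (rule bounded_linear_intro[OF add sc bd])
  define F where "F = Blinfun f"
  have Fa: "blinfun_apply F = f" unfolding F_def using bl by (rule bounded_linear_Blinfun_apply)
  have "norm F \<le> 1" by (rule norm_blinfun_bound) (use bd Fa in auto)
  moreover have "\<forall>x a. (x,a)\<in>G0 \<longrightarrow> blinfun_apply F x = a" using fe G0M Fa by auto
  ultimately show ?thesis by blast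
qed

lemma orth_ineq:
  fixes x y :: "'a::real_normed_vector"
  assumes o: "birkhoff_orth x y"
  shows "\<bar>a\<bar> * norm x \<le> norm (a *\<^sub>R x + b *\<^sub>R y)"
proof (cases "a = 0")
  case True then show ?thesis by simp
next
  case False
  have "a *\<^sub>R x + b *\<^sub>R y = a *\<^sub>R (x + (b/a) *\<^sub>R y)" using False by (simp add: algebra_simps)
  then have "norm (a *\<^sub>R x + b *\<^sub>R y) = \<bar>a\<bar> * norm (x + (b/a) *\<^sub>R y)" by simp
  moreover have "norm x \<le> norm (x + (b/a) *\<^sub>R y)" using o unfolding birkhoff_orth_def by blast
  ultimately show ?thesis by (simp add: mult_left_mono)
qed

lemma james:
  fixes x y :: "'a::real_normed_vector"
  assumes x: "x \<noteq> 0" and o: "birkhoff_orth x y"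
  shows "\<exists>h::'a \<Rightarrow>\<^sub>L real. norm h = 1 \<and> blinfun_apply h x = norm x \<and> blinfun_apply h y = 0"
proof -
  define G0 where "G0 = {(a *\<^sub>R x + b *\<^sub>R y, a * norm x) | a b. True}"
  have nx: "norm x > 0" using x by simp
  have "good G0" unfolding good_def
  proof (intro conjI allI impI)
    show "(0,0) \<in> G0" unfolding G0_def by (rule CollectI, rule exI[of _ 0], rule exI[of _ 0]) simp
  next
    fix v c d assume h: "(v,c) \<in> G0" "(v,d) \<in> G0"
    obtain a b where 1: "v = a *\<^sub>R x + b *\<^sub>R y" "c = a * norm x" using h(1) G0_def by blast
    obtain a' b' where 2: "v = a' *\<^sub>R x + b' *\<^sub>R y" "d = a' * norm x" using h(2) G0_def by blast
    have "(a - a') *\<^sub>R x + (b - b') *\<^sub>R y = 0" using 1 2 by (simp add: algebra_simps)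
    then have "\<bar>a - a'\<bar> * norm x \<le> 0" using orth_ineq[OF o, of "a-a'" "b-b'"] by simp
    then have "a = a'" using nx by (simp add: mult_le_0_iff)
    then show "c = d" using 1 2 by simp
  next
    fix v c w d assume h: "(v,c) \<in> G0" "(w,d) \<in> G0"
    obtain a b where 1: "v = a *\<^sub>R x + b *\<^sub>R y" "c = a * norm x" using h(1) G0_def by blast
    obtain a' b' where 2: "w = a' *\<^sub>R x + b' *\<^sub>R y" "d = a' * norm x" using h(2) G0_def by blast
    have "v + w = (a+a') *\<^sub>R x + (b+b') *\<^sub>R y" "c + d = (a+a') * norm x" using 1 2 by (simp_all add: algebra_simps)
    then show "(v+w, c+d) \<in> G0" unfolding G0_def by blast
  next
    fix v c r assume h: "(v,c) \<in> G0"
    obtain a b where 1: "v = a *\<^sub>R x + b *\<^sub>R y" "c = a * norm x" using h(1) G0_def by blast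
    have "r *\<^sub>R v = (r*a) *\<^sub>R x + (r*b) *\<^sub>R y" "r * c = (r*a) * norm x" using 1 by (simp_all add: algebra_simps)
    then show "(r *\<^sub>R v, r*c) \<in> G0" unfolding G0_def by blast
  next
    fix v c assume h: "(v,c) \<in> G0"
    obtain a b where 1: "v = a *\<^sub>R x + b *\<^sub>R y" "c = a * norm x" using h(1) G0_def by blast
    have "a * norm x \<le> \<bar>a\<bar> * norm x" by (simp add: mult_right_mono)
    then show "c \<le> norm v" using orth_ineq[OF o, of a b] 1 by simp
  qed
  from hb[OF this] obtain h :: "'a \<Rightarrow>\<^sub>L real" where h: "norm h \<le> 1"
    "\<And>v c. (v,c) \<in> G0 \<Longrightarrow> blinfun_apply h v = c" by blast
  have hx: "blinfun_apply h x = norm x" using h(2)[of x "norm x"] unfolding G0_def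
    by (metis (mono_tags, lifting) CollectI add.right_neutral mult_1 scaleR_one scaleR_zero_left)
  have hy: "blinfun_apply h y = 0" using h(2)[of y 0] unfolding G0_def
    by (metis (mono_tags, lifting) CollectI add_0 mult_zero_left scaleR_one scaleR_zero_left)
  have "norm x \<le> norm h * norm x" using norm_blinfun[of h x] hx by simp
  then have "norm h \<ge> 1" using nx by simp
  with h(1) hx hy show ?thesis by (intro exI[of _ h]) simp
qed

lemma norming:
  fixes x :: "'a::real_normed_vector"
  assumes x: "x \<noteq> 0"
  shows "\<exists>h::'a \<Rightarrow>\<^sub>L real. norm h = 1 \<and> blinfun_apply h x = norm x"
  using james[OF x, of 0] unfolding birkhoff_orth_def by auto

definition evalf :: "'a::real_normed_vector \<Rightarrow> ('b::real_normed_vector \<Rightarrow>\<^sub>L real) \<Rightarrow> (('a \<Rightarrow>\<^sub>L 'b) \<Rightarrow>\<^sub>L real)" where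
  "evalf x g = Blinfun (\<lambda>A. blinfun_apply g (blinfun_apply A x))"

lemma evalf_apply: "blinfun_apply (evalf x g) A = blinfun_apply g (blinfun_apply A x)"
proof -
  have "bounded_linear (\<lambda>A. blinfun_apply g (blinfun_apply A x))"
    by (rule bounded_linear_compose[OF blinfun.bounded_linear_right blinfun.bounded_linear_left])
  then show ?thesis unfolding evalf_def by (simp add: bounded_linear_Blinfun_apply)
qed

definition rank1 :: "('a::real_normed_vector \<Rightarrow>\<^sub>L real) \<Rightarrow> 'b::real_normed_vector \<Rightarrow> ('a \<Rightarrow>\<^sub>L 'b)" where
  "rank1 f y = Blinfun (\<lambda>v. blinfun_apply f v *\<^sub>R y)"

lemma rank1_apply: "blinfun_apply (rank1 f y) v = blinfun_apply f v *\<^sub>R y"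
proof -
  have "bounded_linear (\<lambda>v. blinfun_apply f v *\<^sub>R y)"
    by (rule bounded_linear_compose[OF bounded_linear_scaleR_left blinfun.bounded_linear_right])
  then show ?thesis unfolding rank1_def by (simp add: bounded_linear_Blinfun_apply)
qed

lemma unit_le: "norm (h::'a::real_normed_vector \<Rightarrow>\<^sub>L real) = 1 \<Longrightarrow> blinfun_apply h v \<le> norm v"
  using norm_blinfun[of h v] by simp

lemma evalf_supp:
  fixes T :: "'a::real_normed_vector \<Rightarrow>\<^sub>L 'b::real_normed_vector"
  assumes T: "T \<noteq> 0" and x: "norm x = 1" "norm (blinfun_apply T x) = norm T"
    and g: "norm g = 1" "blinfun_apply g (blinfun_apply T x) = norm (blinfun_apply T x)"
  shows "norm (evalf x g) = 1 \<and> blinfun_apply (evalf x g) T = norm T"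
proof -
  have le: "norm (evalf x g) \<le> 1"
  proof (rule norm_blinfun_bound)
    fix A :: "'a \<Rightarrow>\<^sub>L 'b"
    have "norm (blinfun_apply g (blinfun_apply A x)) \<le> norm g * norm (blinfun_apply A x)" by (rule norm_blinfun)
    also have "\<dots> \<le> 1 * norm A" using norm_blinfun[of A x] x g by simp
    finally show "norm (blinfun_apply (evalf x g) A) \<le> 1 * norm A" by (simp add: evalf_apply)
  qed simp
  have ap: "blinfun_apply (evalf x g) T = norm T" using x g by (simp add: evalf_apply)
  have "norm T \<le> norm (evalf x g) * norm T" using norm_blinfun[of "evalf x g" T] ap by simp
  then have "norm (evalf x g) \<ge> 1" using T by simp
  with le ap show ?thesis by simp
qed

theorem theorem3p3:
  fixes T :: "'a::real_normed_vector \<Rightarrow>\<^sub>L 'b::real_normed_vector"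
  assumes "T \<noteq> 0"
    and "norm_attain_set T \<noteq> {}"
  shows "smooth_point T \<longleftrightarrow>
    (\<exists>x0. norm x0 = 1 \<and> norm_attain_set T = {x0, - x0}
       \<and> smooth_point (blinfun_apply T x0)
       \<and> (\<forall>A :: 'a \<Rightarrow>\<^sub>L 'b. birkhoff_orth T A \<longleftrightarrow>
              birkhoff_orth (blinfun_apply T x0) (blinfun_apply A x0)))"
proof
  assume sm: "smooth_point T"
  then obtain \<Phi> where \<Phi>: "norm \<Phi> = 1" "blinfun_apply \<Phi> T = norm T"
    and uniq: "\<And>\<Psi>. norm \<Psi> = 1 \<Longrightarrow> blinfun_apply \<Psi> T = norm T \<Longrightarrow> \<Psi> = \<Phi>"
    unfolding smooth_point_def by blast
  obtain x0 where x0: "norm x0 = 1" "norm (blinfun_apply T x0) = norm T"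
    using assms(2) unfolding norm_attain_set_def by blast
  have nT: "norm T > 0" using assms(1) by simp
  have Tx0: "blinfun_apply T x0 \<noteq> 0" using x0 nT by auto
  obtain g where g: "norm g = 1" "blinfun_apply g (blinfun_apply T x0) = norm (blinfun_apply T x0)"
    using norming[OF Tx0] by blast
  have \<Phi>eq: "evalf x0 g = \<Phi>" using evalf_supp[OF assms(1) x0 g] uniq by blast
  have x0ne: "x0 \<noteq> 0" using x0 by auto
  obtain f0 :: "'a \<Rightarrow>\<^sub>L real" where f0: "norm f0 = 1" "blinfun_apply f0 x0 = 1" using norming[OF x0ne] unfolding x0(1) by blast
  have sm2: "smooth_point (blinfun_apply T x0)"
    unfolding smooth_point_def
  proof (rule conjI[OF Tx0], rule ex1I[of _ g])
    show "norm g = 1 \<and> blinfun_apply g (blinfun_apply T x0) = norm (blinfun_apply T x0)" using g by simp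
  next
    fix g' :: "'b \<Rightarrow>\<^sub>L real"
    assume g': "norm g' = 1 \<and> blinfun_apply g' (blinfun_apply T x0) = norm (blinfun_apply T x0)"
    have "evalf x0 g' = \<Phi>" using evalf_supp[OF assms(1) x0, of g'] g' uniq by blast
    then have e: "evalf x0 g' = evalf x0 g" using \<Phi>eq by simp
    show "g' = g"
    proof (rule blinfun_eqI)
      fix y
      have "blinfun_apply (evalf x0 g') (rank1 f0 y) = blinfun_apply (evalf x0 g) (rank1 f0 y)" using e by simp
      then show "blinfun_apply g' y = blinfun_apply g y" by (simp add: evalf_apply rank1_apply f0)
    qed
  qed
  have MT: "norm_attain_set T = {x0, - x0}"
  proof
    show "{x0, - x0} \<subseteq> norm_attain_set T" using x0
      unfolding norm_attain_set_def by (auto simp: blinfun.minus_right)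
  next
    show "norm_attain_set T \<subseteq> {x0, - x0}"
    proof
      fix x1 assume "x1 \<in> norm_attain_set T"
      then have x1: "norm x1 = 1" "norm (blinfun_apply T x1) = norm T" unfolding norm_attain_set_def by auto
      have Tx1: "blinfun_apply T x1 \<noteq> 0" using x1 nT by auto
      obtain g1 where g1: "norm g1 = 1" "blinfun_apply g1 (blinfun_apply T x1) = norm (blinfun_apply T x1)"
        using norming[OF Tx1] by blast
      have e: "evalf x1 g1 = evalf x0 g" using evalf_supp[OF assms(1) x1 g1] uniq \<Phi>eq by blast
      have E: "blinfun_apply f x1 * blinfun_apply g1 y = blinfun_apply f x0 * blinfun_apply g y" for f :: "'a \<Rightarrow>\<^sub>L real" and y
      proof -
        have "blinfun_apply (evalf x1 g1) (rank1 f y) = blinfun_apply (evalf x0 g) (rank1 f y)" using e by simp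
        then show ?thesis by (simp add: evalf_apply rank1_apply blinfun.scaleR_right)
      qed
      define c where "c = blinfun_apply f0 x1"
      have gy: "blinfun_apply g y = c * blinfun_apply g1 y" for y using E[of f0 y] f0 c_def by simp
      have g1T: "blinfun_apply g1 (blinfun_apply T x1) \<noteq> 0" using g1 Tx1 by simp
      have fz: "blinfun_apply f (x1 - c *\<^sub>R x0) = 0" for f :: "'a \<Rightarrow>\<^sub>L real"
      proof -
        have "blinfun_apply f x1 * blinfun_apply g1 (blinfun_apply T x1) = blinfun_apply f x0 * c * blinfun_apply g1 (blinfun_apply T x1)"
          using E[of f "blinfun_apply T x1"] gy by simp
        then have "blinfun_apply f x1 = blinfun_apply f x0 * c" using g1T by simp
        then show ?thesis by (simp add: blinfun.diff_right blinfun.scaleR_right)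
      qed
      have x1c: "x1 = c *\<^sub>R x0"
      proof (rule ccontr)
        assume "x1 \<noteq> c *\<^sub>R x0"
        then have "x1 - c *\<^sub>R x0 \<noteq> 0" by simp
        from norming[OF this] obtain h :: "'a \<Rightarrow>\<^sub>L real" where "blinfun_apply h (x1 - c *\<^sub>R x0) = norm (x1 - c *\<^sub>R x0)" by blast
        with fz[of h] \<open>x1 - c *\<^sub>R x0 \<noteq> 0\<close> show False by simp
      qed
      then have "\<bar>c\<bar> = 1" using x1 x0 by simp
      then have "c = 1 \<or> c = -1" by linarith
      then show "x1 \<in> {x0, - x0}" using x1c by auto
    qed
  qed
  have iii: "birkhoff_orth T A \<longleftrightarrow> birkhoff_orth (blinfun_apply T x0) (blinfun_apply A x0)" for A
  proof
    assume o: "birkhoff_orth T A"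
    from james[OF assms(1) o] obtain \<Psi> where \<Psi>: "norm \<Psi> = 1" "blinfun_apply \<Psi> T = norm T" "blinfun_apply \<Psi> A = 0"
      by blast
    have "\<Psi> = evalf x0 g" using uniq[OF \<Psi>(1,2)] \<Phi>eq by simp
    then have gA: "blinfun_apply g (blinfun_apply A x0) = 0" using \<Psi>(3) by (simp add: evalf_apply)
    show "birkhoff_orth (blinfun_apply T x0) (blinfun_apply A x0)" unfolding birkhoff_orth_def
    proof
      fix t :: real
      have "norm (blinfun_apply T x0) = blinfun_apply g (blinfun_apply T x0 + t *\<^sub>R blinfun_apply A x0)"
        using g gA by (simp add: blinfun.add_right blinfun.scaleR_right)
      also have "\<dots> \<le> norm (blinfun_apply T x0 + t *\<^sub>R blinfun_apply A x0)" by (rule unit_le[OF g(1)])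
      finally show "norm (blinfun_apply T x0) \<le> norm (blinfun_apply T x0 + t *\<^sub>R blinfun_apply A x0)" .
    qed
  next
    assume o: "birkhoff_orth (blinfun_apply T x0) (blinfun_apply A x0)"
    show "birkhoff_orth T A" unfolding birkhoff_orth_def
    proof
      fix t :: real
      have "norm T = norm (blinfun_apply T x0)" using x0 by simp
      also have "\<dots> \<le> norm (blinfun_apply T x0 + t *\<^sub>R blinfun_apply A x0)" using o unfolding birkhoff_orth_def by blast
      also have "\<dots> = norm (blinfun_apply (T + t *\<^sub>R A) x0)" by (simp add: blinfun.add_left blinfun.scaleR_left)
      also have "\<dots> \<le> norm (T + t *\<^sub>R A)" using norm_blinfun[of "T + t *\<^sub>R A" x0] x0 by simp
      finally show "norm T \<le> norm (T + t *\<^sub>R A)" .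
    qed
  qed
  show "\<exists>x0. norm x0 = 1 \<and> norm_attain_set T = {x0, - x0}
       \<and> smooth_point (blinfun_apply T x0)
       \<and> (\<forall>A :: 'a \<Rightarrow>\<^sub>L 'b. birkhoff_orth T A \<longleftrightarrow>
              birkhoff_orth (blinfun_apply T x0) (blinfun_apply A x0))"
    using x0 MT sm2 iii by blast
next
  assume "\<exists>x0. norm x0 = 1 \<and> norm_attain_set T = {x0, - x0}
       \<and> smooth_point (blinfun_apply T x0)
       \<and> (\<forall>A :: 'a \<Rightarrow>\<^sub>L 'b. birkhoff_orth T A \<longleftrightarrow>
              birkhoff_orth (blinfun_apply T x0) (blinfun_apply A x0))"
  then obtain x0 where x0: "norm x0 = 1" and MT: "norm_attain_set T = {x0, - x0}"
    and sm: "smooth_point (blinfun_apply T x0)"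
    and iii: "\<And>A. birkhoff_orth T A \<longleftrightarrow> birkhoff_orth (blinfun_apply T x0) (blinfun_apply A x0)"
    by blast
  have nT: "norm T > 0" using assms(1) by simp
  have x0T: "norm (blinfun_apply T x0) = norm T" using MT unfolding norm_attain_set_def by blast
  have Tx0: "blinfun_apply T x0 \<noteq> 0" using sm unfolding smooth_point_def by blast
  obtain g where g: "norm g = 1" "blinfun_apply g (blinfun_apply T x0) = norm (blinfun_apply T x0)"
    and guniq: "\<And>h. norm h = 1 \<Longrightarrow> blinfun_apply h (blinfun_apply T x0) = norm (blinfun_apply T x0) \<Longrightarrow> h = g"
    using sm unfolding smooth_point_def by blast
  have sup: "norm (evalf x0 g) = 1 \<and> blinfun_apply (evalf x0 g) T = norm T"
    using evalf_supp[OF assms(1) x0 x0T g] .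
  show "smooth_point T" unfolding smooth_point_def
  proof (rule conjI[OF assms(1)], rule ex1I[of _ "evalf x0 g"])
    show "norm (evalf x0 g) = 1 \<and> blinfun_apply (evalf x0 g) T = norm T" by (rule sup)
  next
    fix \<Psi> :: "('a \<Rightarrow>\<^sub>L 'b) \<Rightarrow>\<^sub>L real"
    assume \<Psi>: "norm \<Psi> = 1 \<and> blinfun_apply \<Psi> T = norm T"
    show "\<Psi> = evalf x0 g"
    proof (rule blinfun_eqI)
      fix A :: "'a \<Rightarrow>\<^sub>L 'b"
      define r where "r = blinfun_apply \<Psi> A / norm T"
      define B where "B = A - r *\<^sub>R T"
      have \<Psi>B: "blinfun_apply \<Psi> B = 0" using \<Psi> nT unfolding B_def r_def
        by (simp add: blinfun.diff_right blinfun.scaleR_right)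
      have "birkhoff_orth T B" unfolding birkhoff_orth_def
      proof
        fix t :: real
        have "norm T = blinfun_apply \<Psi> (T + t *\<^sub>R B)" using \<Psi> \<Psi>B by (simp add: blinfun.add_right blinfun.scaleR_right)
        also have "\<dots> \<le> norm (T + t *\<^sub>R B)" using \<Psi> unit_le by blast
        finally show "norm T \<le> norm (T + t *\<^sub>R B)" .
      qed
      then have "birkhoff_orth (blinfun_apply T x0) (blinfun_apply B x0)" using iii by blast
      from james[OF Tx0 this] obtain h where h: "norm h = 1" "blinfun_apply h (blinfun_apply T x0) = norm (blinfun_apply T x0)"
        "blinfun_apply h (blinfun_apply B x0) = 0" by blast
      have "h = g" using guniq h(1,2) by blast
      then have "blinfun_apply g (blinfun_apply B x0) = 0" using h(3) by simp
      then have "blinfun_apply g (blinfun_apply A x0) = r * norm T"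
        using g x0T unfolding B_def by (simp add: blinfun.diff_right blinfun.scaleR_right blinfun.diff_left blinfun.scaleR_left)
      then show "blinfun_apply \<Psi> A = blinfun_apply (evalf x0 g) A"
        using nT unfolding r_def by (simp add: evalf_apply)
    qed
  qed
qed

end
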